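(* Let $\Theta=\{\Theta_\omega\in B(\mathcal H,\mathcal K_\omega):\omega\in\Omega\}$ be a continuous $g$-frame for $\mathcal H$ with dual $\Lambda=\{\Lambda_\omega\in B(\mathcal H,\mathcal K_\omega):\omega\in\Omega\}$, and let $\Phi=\{\Phi_\omega\in B(\mathcal K,\mathcal K_\omega):\omega\in\Omega\}$ be a continuous $g$-frame for $\mathcal K$ with dual $\Psi=\{\Psi_\omega\in B(\mathcal K,\mathcal K_\omega):\omega\in\Omega\}$. Suppose $\Lambda$ and $\Phi$ are strongly disjoint, and $\Theta$ and $\Psi$ are strongly disjoint. Define $\Gamma_\omega,\Delta_\omega\in B(\mathcal H\oplus\mathcal K,\mathcal K_\omega)$ by $\Gamma_\omega(h\oplus k)=\Lambda_\omega h+\Psi_\omega k$ and $\Delta_\omega(h\oplus k)=\Theta_\omega h+\Phi_\omega k$. Then $\Gamma=\{\Gamma_\omega\}$ and $\Delta=\{\Delta_\omega\}$ are dual continuous $g$-frames for $\mathcal H\oplus\mathcal K$.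
   Context: $\mathcal H,\mathcal K$ are complex Hilbert spaces, $(\Omega,\mu)$ a measure space with positive measure $\mu$, and $\{\mathcal K_\omega:\omega\in\Omega\}$ a family of complex Hilbert spaces. A map $F$ on $\Omega$ with $F(\omega)\in\mathcal K_\omega$ is strongly measurable if it is measurable as a map $\Omega\to\bigoplus_\omega\mathcal K_\omega$; $\widehat{\mathcal K}$ is the Hilbert space of strongly measurable such $F$ with $\int_\Omega\|F(\omega)\|^2d\mu<\infty$, inner product $\langle F,G\rangle=\int_\Omega\langle F(\omega),G(\omega)\rangle d\mu$. For a Hilbert space $\mathcal V$, a family $\Lambda=\{\Lambda_\omega\in B(\mathcal V,\mathcal K_\omega)\}$ is a continuous $g$-frame for $\mathcal V$ if $\omega\mapsto\Lambda_\omega f$ is strongly measurable for each $f$ and there are $0<A\le B<\infty$ with $A\|f\|^2\le\int_\Omega\|\Lambda_\omega f\|^2d\mu(\omega)\le B\|f\|^2$ for all $f\in\mathcal V$. Its analysis operator $T_\Lambda^*:\mathcal V\to\widehat{\mathcal K}$ is $(T_\Lambda^*f)(\omega)=\Lambda_\omega f$. Two continuous $g$-frames $\Lambda,\Theta$ (possibly on different spaces, same $\{\mathcal K_\omega\}$) are strongly disjoint if $\mathrm{Range}\,T_\Lambda^*\perp\mathrm{Range}\,T_\Theta^*$ in $\widehat{\mathcal K}$. Continuous $g$-frames $\Lambda,\Theta$ for $\mathcal V$ are dual (i.e. $\Theta$ is a dual of $\Lambda$) if $\langle f,g\rangle=\int_\Omega\langle f,\Theta_\omega^*\Lambda_\omega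 g\rangle d\mu(\omega)$ for all $f,g\in\mathcal V$. *)

theory Defs
  imports "HOL-Analysis.Analysis"
begin

text \<open>The distribution has no complex vector spaces, so we introduce them.
  Convention: the inner product is linear in the first argument and
  conjugate-linear in the second.\<close>

class complex_vector = real_vector +
  fixes scaleC :: "complex \<Rightarrow> 'a \<Rightarrow> 'a" (infixr \<open>*\<^sub>C\<close> 75)
  assumes scaleC_add_right: "a *\<^sub>C (x + y) = a *\<^sub>C x + a *\<^sub>C y"
    and scaleC_add_left: "(a + b) *\<^sub>C x = a *\<^sub>C x + b *\<^sub>C x"
    and scaleC_scaleC: "a *\<^sub>C (b *\<^sub>C x) = (a * b) *\<^sub>C x"
    and scaleC_one: "1 *\<^sub>C x = x"
    and scaleC_of_real: "complex_of_real r *\<^sub>C x = r *\<^sub>R x"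

class complex_inner = complex_vector + real_normed_vector +
  fixes cinner :: "'a \<Rightarrow> 'a \<Rightarrow> complex"
  assumes cinner_commute: "cinner x y = cnj (cinner y x)"
    and cinner_add_left: "cinner (x + y) z = cinner x z + cinner y z"
    and cinner_scaleC_left: "cinner (r *\<^sub>C x) y = r * cinner x y"
    and cinner_ge_zero: "0 \<le> Re (cinner x x)"
    and cinner_eq_zero_iff: "cinner x x = 0 \<longleftrightarrow> x = 0"
    and norm_eq_sqrt_cinner: "norm x = sqrt (Re (cinner x x))"

class chilbert_space = complex_inner + complete_space

instantiation prod :: (complex_vector, complex_vector) complex_vector
begin
definition scaleC_prod_def: "c *\<^sub>C x = (c *\<^sub>C fst x, c *\<^sub>C snd x)"
instance
  by standard (auto simp: scaleC_prod_def scaleC_add_right scaleC_add_left scaleC_scaleC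
      scaleC_one scaleC_of_real prod_eq_iff)
end

instantiation prod :: (complex_inner, complex_inner) complex_inner
begin
definition cinner_prod_def: "cinner x y = cinner (fst x) (fst y) + cinner (snd x) (snd y)"
instance
proof
  fix x y z :: "'a \<times> 'b" and r :: complex
  show "cinner x y = cnj (cinner y x)"
    by (simp add: cinner_prod_def cinner_commute[of "fst x"] cinner_commute[of "snd x"])
  show "cinner (x + y) z = cinner x z + cinner y z"
    by (simp add: cinner_prod_def cinner_add_left)
  show "cinner (r *\<^sub>C x) y = r * cinner x y"
    by (simp add: cinner_prod_def scaleC_prod_def cinner_scaleC_left algebra_simps)
  show "0 \<le> Re (cinner x x)"
    using cinner_ge_zero[of "fst x"] cinner_ge_zero[of "snd x"] by (simp add: cinner_prod_def)
  have a: "Re (cinner (fst x) (fst x)) = (norm (fst x))\<^sup>2"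
    using cinner_ge_zero[of "fst x"] by (simp add: norm_eq_sqrt_cinner)
  have b: "Re (cinner (snd x) (snd x)) = (norm (snd x))\<^sup>2"
    using cinner_ge_zero[of "snd x"] by (simp add: norm_eq_sqrt_cinner)
  show "norm x = sqrt (Re (cinner x x))"
    by (simp add: cinner_prod_def norm_prod_def a b)
  have ia: "Im (cinner (fst x) (fst x)) = 0"
    using cinner_commute[of "fst x" "fst x"] by (metis cnj.sel(2) neg_equal_zero)
  have ib: "Im (cinner (snd x) (snd x)) = 0"
    using cinner_commute[of "snd x" "snd x"] by (metis cnj.sel(2) neg_equal_zero)
  show "cinner x x = 0 \<longleftrightarrow> x = 0"
  proof
    assume "cinner x x = 0"
    then have "Re (cinner (fst x) (fst x)) + Re (cinner (snd x) (snd x)) = 0"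
      by (metis cinner_prod_def plus_complex.sel(1) zero_complex.sel(1))
    then have "Re (cinner (fst x) (fst x)) = 0 \<and> Re (cinner (snd x) (snd x)) = 0"
      using cinner_ge_zero[of "fst x"] cinner_ge_zero[of "snd x"] by linarith
    then have "cinner (fst x) (fst x) = 0 \<and> cinner (snd x) (snd x) = 0"
      using ia ib complex_eqI by auto
    then show "x = 0" by (simp add: cinner_eq_zero_iff prod_eq_iff)
  next
    assume "x = 0"
    then show "cinner x x = 0"
      using cinner_eq_zero_iff[of "0::'a"] cinner_eq_zero_iff[of "0::'b"]
      by (simp add: cinner_prod_def)
  qed
qed
end

instance prod :: (chilbert_space, chilbert_space) chilbert_space ..

definition bounded_clinear :: "('a::complex_inner \<Rightarrow> 'b::complex_inner) \<Rightarrow> bool" where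
  "bounded_clinear T \<longleftrightarrow>
     (bounded_linear T \<and> (\<forall>c x. T (c *\<^sub>C x) = c *\<^sub>C T x))"

definition closed_csubspace :: "'a::complex_inner set \<Rightarrow> bool" where
  "closed_csubspace S \<longleftrightarrow> closed S \<and> 0 \<in> S \<and> (\<forall>x\<in>S. \<forall>y\<in>S. x + y \<in> S)
     \<and> (\<forall>c. \<forall>x\<in>S. c *\<^sub>C x \<in> S)"

text \<open>Strong (Bochner) measurability, in Pettis form: Borel measurable and
  separably valued.\<close>
definition strongly_measurable :: "'w measure \<Rightarrow> ('w \<Rightarrow> 'k::complex_inner) \<Rightarrow> bool" where
  "strongly_measurable M F \<longleftrightarrow>
     F \<in> borel_measurable M \<and> (\<exists>D. countable D \<and> F ` space M \<subseteq> closure D)"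

text \<open>The family of spaces K \<omega> is modelled by closed subspaces of one
  ambient Hilbert space 'k. cg_frame M K \<Lambda>: \<Lambda> is a
  continuous g-frame for the whole space 'v w.r.t. {K \<omega>}.\<close>
definition cg_frame ::
  "'w measure \<Rightarrow> ('w \<Rightarrow> 'k::chilbert_space set) \<Rightarrow> ('w \<Rightarrow> 'v::chilbert_space \<Rightarrow> 'k) \<Rightarrow> bool" where
  "cg_frame M K \<Lambda> \<longleftrightarrow>
     (\<forall>\<omega>\<in>space M. bounded_clinear (\<Lambda> \<omega>) \<and> range (\<Lambda> \<omega>) \<subseteq> K \<omega>) \<and>
     (\<forall>f. strongly_measurable M (\<lambda>\<omega>. \<Lambda> \<omega> f)) \<and>
     (\<exists>A B. 0 < A \<and> A \<le> B \<and>
        (\<forall>f. ennreal (A * (norm f)\<^sup>2) \<le> (\<integral>\<^sup>+\<omega>. ennreal ((norm (\<Lambda> \<omega> f))\<^sup>2) \<partial>M) \<and>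
             (\<integral>\<^sup>+\<omega>. ennreal ((norm (\<Lambda> \<omega> f))\<^sup>2) \<partial>M) \<le> ennreal (B * (norm f)\<^sup>2)))"

text \<open>Range of the analysis operator of \<Lambda> is orthogonal in the space of
  square integrable sections to the range of that of \<Theta>.\<close>
definition strongly_disjoint ::
  "'w measure \<Rightarrow> ('w \<Rightarrow> 'k::chilbert_space set) \<Rightarrow> ('w \<Rightarrow> 'v::chilbert_space \<Rightarrow> 'k)
     \<Rightarrow> ('w \<Rightarrow> 'u::chilbert_space \<Rightarrow> 'k) \<Rightarrow> bool" where
  "strongly_disjoint M K \<Lambda> \<Theta> \<longleftrightarrow> cg_frame M K \<Lambda> \<and> cg_frame M K \<Theta> \<and>
     (\<forall>f g. (\<integral>\<omega>. cinner (\<Lambda> \<omega> f) (\<Theta> \<omega> g) \<partial>M) = 0)"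

definition cg_dual_of ::
  "'w measure \<Rightarrow> ('w \<Rightarrow> 'k::chilbert_space set) \<Rightarrow> ('w \<Rightarrow> 'v::chilbert_space \<Rightarrow> 'k)
     \<Rightarrow> ('w \<Rightarrow> 'v \<Rightarrow> 'k) \<Rightarrow> bool" where
  "cg_dual_of M K \<Theta> \<Lambda> \<longleftrightarrow> cg_frame M K \<Theta> \<and> cg_frame M K \<Lambda> \<and>
     (\<forall>f g. cinner f g = (\<integral>\<omega>. cinner (\<Theta> \<omega> f) (\<Lambda> \<omega> g) \<partial>M))"

end

theory Submission
  imports Defs
begin


lemma ci_zero_left[simp]: "cinner 0 (y::'a::complex_inner) = 0"
  using cinner_add_left[of "0::'a" 0 y] by simp
lemma ci_minus_left: "cinner (- x) (y::'a::complex_inner) = - cinner x y"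
  using cinner_add_left[of x "-x" y] by (simp add: eq_neg_iff_add_eq_0 add.commute)
lemma ci_diff_left: "cinner (x - z) (y::'a::complex_inner) = cinner x y - cinner z y"
  using cinner_add_left[of x "-z" y] by (simp add: ci_minus_left)
lemma ci_add_right: "cinner x (y + z::'a::complex_inner) = cinner x y + cinner x z"
  by (metis cinner_add_left cinner_commute complex_cnj_add)
lemma ci_diff_right: "cinner x (y - z::'a::complex_inner) = cinner x y - cinner x z"
  by (metis ci_diff_left cinner_commute complex_cnj_diff)
lemma ci_scaleC_right: "cinner x (c *\<^sub>C y::'a::complex_inner) = cnj c * cinner x y"
  by (metis cinner_commute cinner_scaleC_left complex_cnj_mult)
lemma ci_scaleR_left: "cinner (r *\<^sub>R x) (y::'a::complex_inner) = r *\<^sub>R cinner x y"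
  by (metis cinner_scaleC_left scaleC_of_real scaleR_conv_of_real)
lemma ci_scaleR_right: "cinner x (r *\<^sub>R y::'a::complex_inner) = r *\<^sub>R cinner x y"
  by (metis ci_scaleC_right scaleC_of_real scaleR_conv_of_real complex_cnj_complex_of_real)
lemma ci_self_real: "cinner x (x::'a::complex_inner) = complex_of_real ((norm x)\<^sup>2)"
proof -
  have "Im (cinner x x) = 0" using cinner_commute[of x x] by (metis cnj.sel(2) neg_equal_zero)
  moreover have "Re (cinner x x) = (norm x)\<^sup>2" using cinner_ge_zero[of x] by (simp add: norm_eq_sqrt_cinner)
  ultimately show ?thesis by (simp add: complex_eq_iff)
qed

lemma ci_cauchy_schwarz: "norm (cinner x (y::'a::complex_inner)) \<le> norm x * norm y"
proof (cases "y = 0")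
  case True then show ?thesis
    using cinner_commute[of x y] by (simp)
next
  case False
  define a where "a = cinner x y"
  define b where "b = (norm y)\<^sup>2"
  have b0: "b > 0" using False by (simp add: b_def)
  have yy: "cinner y y = of_real b" by (simp add: b_def ci_self_real)
  have yx: "cinner y x = cnj a" by (simp add: a_def cinner_commute[of y x])
  define t where "t = a / of_real b"
  have "cinner (x - t *\<^sub>C y) (x - t *\<^sub>C y) =
     cinner x x - t * cnj a - cnj t * a + t * cnj t * of_real b"
    by (simp add: ci_diff_left ci_diff_right cinner_scaleC_left ci_scaleC_right yy yx a_def[symmetric] algebra_simps)
  also have "\<dots> = cinner x x - a * cnj a / of_real b"
    using b0 by (simp add: t_def field_simps)
  also have "\<dots> = of_real ((norm x)\<^sup>2 - (cmod a)\<^sup>2 / b)"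
    by (simp add: ci_self_real complex_norm_square[symmetric])
  finally have e: "cinner (x - t *\<^sub>C y) (x - t *\<^sub>C y) = of_real ((norm x)\<^sup>2 - (cmod a)\<^sup>2 / b)" .
  have "0 \<le> (norm x)\<^sup>2 - (cmod a)\<^sup>2 / b"
    using cinner_ge_zero[of "x - t *\<^sub>C y"] by (simp add: e)
  then have "(cmod a)\<^sup>2 \<le> (norm x)\<^sup>2 * (norm y)\<^sup>2"
    using b0 by (simp add: b_def field_simps)
  then have "(cmod a)\<^sup>2 \<le> (norm x * norm y)\<^sup>2" by (simp add: power_mult_distrib)
  then show ?thesis unfolding a_def by (simp add: power2_le_iff_abs_le)
qed

lemma ci_bilinear: "bounded_bilinear (cinner :: 'a::complex_inner \<Rightarrow> 'a \<Rightarrow> complex)"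
  apply (rule bounded_bilinear.intro)
  apply (simp_all add: cinner_add_left ci_add_right ci_scaleR_left ci_scaleR_right)
  apply (rule exI[of _ 1]) using ci_cauchy_schwarz by auto

lemma ci_continuous: "continuous_on UNIV (\<lambda>p::'a::complex_inner \<times> 'a. cinner (fst p) (snd p))"
  apply (rule continuous_at_imp_continuous_on, auto)
  apply (rule bounded_bilinear.continuous[OF ci_bilinear])
  by (auto intro: continuous_fst continuous_snd continuous_ident)


lemma pair_meas:
  fixes F :: "'w \<Rightarrow> 'a::metric_space" and G :: "'w \<Rightarrow> 'b::metric_space"
  assumes F: "F \<in> borel_measurable M" and G: "G \<in> borel_measurable M"
    and D1: "countable D1" and D2: "countable D2"
    and FD: "F ` space M \<subseteq> closure D1" and GD: "G ` space M \<subseteq> closure D2"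
  shows "(\<lambda>\<omega>. (F \<omega>, G \<omega>)) \<in> borel_measurable M"
proof (rule borel_measurableI)
  fix U :: "('a \<times> 'b) set" assume U: "open U"
  define I where "I = {(d1,d2,r). d1\<in>D1 \<and> d2\<in>D2 \<and> r \<in> \<rat> \<and> r>0 \<and> ball d1 r \<times> ball d2 r \<subseteq> U}"
  define A where "A = (\<lambda>(d1,d2,r). (F -` ball d1 r \<inter> space M) \<inter> (G -` ball d2 r \<inter> space M))"
  have cI: "countable I"
  proof -
    have "I \<subseteq> D1 \<times> D2 \<times> \<rat>" by (auto simp: I_def)
    moreover have "countable (D1 \<times> D2 \<times> \<rat>)" using D1 D2 countable_rat by blast
    ultimately show ?thesis by (rule countable_subset)
  qed
  have eq: "(\<lambda>\<omega>. (F \<omega>, G \<omega>)) -` U \<inter> space M = \<Union> (A ` I)"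
  proof
    show "\<Union> (A ` I) \<subseteq> (\<lambda>\<omega>. (F \<omega>, G \<omega>)) -` U \<inter> space M"
      by (auto simp: A_def I_def)
  next
    show "(\<lambda>\<omega>. (F \<omega>, G \<omega>)) -` U \<inter> space M \<subseteq> \<Union> (A ` I)"
    proof
      fix \<omega> assume w: "\<omega> \<in> (\<lambda>\<omega>. (F \<omega>, G \<omega>)) -` U \<inter> space M"
      then have wU: "(F \<omega>, G \<omega>) \<in> U" and wM: "\<omega> \<in> space M" by auto
      obtain P Q where PQ: "open P" "open Q" "(F \<omega>, G \<omega>) \<in> P \<times> Q" "P \<times> Q \<subseteq> U"
        using open_prod_elim[OF U wU] by metis
      obtain e1 where e1: "e1 > 0" "ball (F \<omega>) e1 \<subseteq> P" using PQ openE by (metis mem_Sigma_iff)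
      obtain e2 where e2: "e2 > 0" "ball (G \<omega>) e2 \<subseteq> Q" using PQ openE by (metis mem_Sigma_iff)
      obtain r where r: "r \<in> \<rat>" "0 < r" "r < min e1 e2 / 2"
        using Rats_dense_in_real[of 0 "min e1 e2 / 2"] e1 e2 by auto
      obtain d1 where d1: "d1 \<in> D1" "dist d1 (F \<omega>) < r"
        using FD wM r closure_approachable by (metis image_subset_iff)
      obtain d2 where d2: "d2 \<in> D2" "dist d2 (G \<omega>) < r"
        using GD wM r closure_approachable by (metis image_subset_iff)
      have b1: "ball d1 r \<subseteq> P"
      proof
        fix z assume "z \<in> ball d1 r"
        then have "dist (F \<omega>) z < e1" using d1 r dist_triangle[of "F \<omega>" z d1]
          by (simp add: dist_commute)
        then show "z \<in> P" using e1 by auto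
      qed
      have b2: "ball d2 r \<subseteq> Q"
      proof
        fix z assume "z \<in> ball d2 r"
        then have "dist (G \<omega>) z < e2" using d2 r dist_triangle[of "G \<omega>" z d2]
          by (simp add: dist_commute)
        then show "z \<in> Q" using e2 by auto
      qed
      have "(d1,d2,r) \<in> I" using d1 d2 r b1 b2 PQ by (auto simp: I_def)
      moreover have "\<omega> \<in> A (d1,d2,r)" using wM d1 d2 by (auto simp: A_def)
      ultimately show "\<omega> \<in> \<Union> (A ` I)" by blast
    qed
  qed
  have "\<And>i. i \<in> I \<Longrightarrow> A i \<in> sets M"
    using F G by (auto simp: A_def intro!: sets.Int measurable_sets)
  then show "(\<lambda>\<omega>. (F \<omega>, G \<omega>)) -` U \<inter> space M \<in> sets M"
    unfolding eq by (intro sets.countable_UN'' cI) auto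
qed

lemma sm_add:
  fixes F G :: "'w \<Rightarrow> 'k::complex_inner"
  assumes "strongly_measurable M F" "strongly_measurable M G"
  shows "strongly_measurable M (\<lambda>\<omega>. F \<omega> + G \<omega>)"
proof -
  obtain D1 where D1: "countable D1" "F ` space M \<subseteq> closure D1" using assms(1) by (auto simp: strongly_measurable_def)
  obtain D2 where D2: "countable D2" "G ` space M \<subseteq> closure D2" using assms(2) by (auto simp: strongly_measurable_def)
  have Fm: "F \<in> borel_measurable M" and Gm: "G \<in> borel_measurable M" using assms by (auto simp: strongly_measurable_def)
  have P: "(\<lambda>\<omega>. (F \<omega>, G \<omega>)) \<in> borel_measurable M" by (rule pair_meas[OF Fm Gm D1(1) D2(1) D1(2) D2(2)])
  have c: "continuous_on UNIV (\<lambda>p::'k\<times>'k. fst p + snd p)"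
    by (intro continuous_intros)
  have m: "(\<lambda>\<omega>. F \<omega> + G \<omega>) \<in> borel_measurable M"
    using borel_measurable_continuous_on[OF c P] by simp
  define D where "D = (\<lambda>(a,b). a + b) ` (D1 \<times> D2)"
  have cD: "countable D" unfolding D_def using D1 D2 by blast
  have "(\<lambda>\<omega>. F \<omega> + G \<omega>) ` space M \<subseteq> closure D"
  proof
    fix y assume "y \<in> (\<lambda>\<omega>. F \<omega> + G \<omega>) ` space M"
    then obtain \<omega> where w: "\<omega> \<in> space M" "y = F \<omega> + G \<omega>" by auto
    show "y \<in> closure D" unfolding closure_approachable
    proof (intro allI impI)
      fix e :: real assume e: "e > 0"
      obtain d1 where d1: "d1 \<in> D1" "dist d1 (F \<omega>) < e/2"
        using D1 w e closure_approachable by (metis image_subset_iff half_gt_zero)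
      obtain d2 where d2: "d2 \<in> D2" "dist d2 (G \<omega>) < e/2"
        using D2 w e closure_approachable by (metis image_subset_iff half_gt_zero)
      have "dist (d1 + d2) y < e"
        using dist_triangle_add[of d1 d2 "F \<omega>" "G \<omega>"] d1 d2 w by simp
      moreover have "d1 + d2 \<in> D" using d1 d2 by (auto simp: D_def)
      ultimately show "\<exists>z\<in>D. dist z y < e" by blast
    qed
  qed
  then show ?thesis using m cD by (auto simp: strongly_measurable_def)
qed

lemma sm_cinner:
  fixes F G :: "'w \<Rightarrow> 'k::complex_inner"
  assumes "strongly_measurable M F" "strongly_measurable M G"
  shows "(\<lambda>\<omega>. cinner (F \<omega>) (G \<omega>)) \<in> borel_measurable M"
proof -
  obtain D1 where D1: "countable D1" "F ` space M \<subseteq> closure D1" using assms(1) by (auto simp: strongly_measurable_def)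
  obtain D2 where D2: "countable D2" "G ` space M \<subseteq> closure D2" using assms(2) by (auto simp: strongly_measurable_def)
  have Fm: "F \<in> borel_measurable M" and Gm: "G \<in> borel_measurable M" using assms by (auto simp: strongly_measurable_def)
  have P: "(\<lambda>\<omega>. (F \<omega>, G \<omega>)) \<in> borel_measurable M" by (rule pair_meas[OF Fm Gm D1(1) D2(1) D1(2) D2(2)])
  show ?thesis
    using borel_measurable_continuous_on[OF ci_continuous P] by simp
qed

lemma sm_normsq:
  fixes F :: "'w \<Rightarrow> 'k::complex_inner"
  assumes "strongly_measurable M F"
  shows "(\<lambda>\<omega>. (norm (F \<omega>))\<^sup>2) \<in> borel_measurable M"
proof -
  have Fm: "F \<in> borel_measurable M" using assms by (auto simp: strongly_measurable_def)
  have c: "continuous_on UNIV (\<lambda>x::'k. (norm x)\<^sup>2)" by (intro continuous_intros)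
  show ?thesis using borel_measurable_continuous_on[OF c Fm] by simp
qed


lemma frame_dest:
  fixes \<Lambda> :: "'w \<Rightarrow> 'v::chilbert_space \<Rightarrow> 'k::chilbert_space"
  assumes "cg_frame M K \<Lambda>"
  shows "\<exists>A B. 0 < A \<and> A \<le> B \<and> (\<forall>f. integrable M (\<lambda>\<omega>. (norm (\<Lambda> \<omega> f))\<^sup>2) \<and>
     A * (norm f)\<^sup>2 \<le> (\<integral>\<omega>. (norm (\<Lambda> \<omega> f))\<^sup>2 \<partial>M) \<and>
     (\<integral>\<omega>. (norm (\<Lambda> \<omega> f))\<^sup>2 \<partial>M) \<le> B * (norm f)\<^sup>2)"
proof -
  obtain A B where AB: "0 < A" "A \<le> B"
    "\<And>f. ennreal (A * (norm f)\<^sup>2) \<le> (\<integral>\<^sup>+\<omega>. ennreal ((norm (\<Lambda> \<omega> f))\<^sup>2) \<partial>M)"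
    "\<And>f. (\<integral>\<^sup>+\<omega>. ennreal ((norm (\<Lambda> \<omega> f))\<^sup>2) \<partial>M) \<le> ennreal (B * (norm f)\<^sup>2)"
    using assms unfolding cg_frame_def by blast
  have sm: "\<And>f. strongly_measurable M (\<lambda>\<omega>. \<Lambda> \<omega> f)" using assms unfolding cg_frame_def by blast
  have "\<forall>f. integrable M (\<lambda>\<omega>. (norm (\<Lambda> \<omega> f))\<^sup>2) \<and>
     A * (norm f)\<^sup>2 \<le> (\<integral>\<omega>. (norm (\<Lambda> \<omega> f))\<^sup>2 \<partial>M) \<and>
     (\<integral>\<omega>. (norm (\<Lambda> \<omega> f))\<^sup>2 \<partial>M) \<le> B * (norm f)\<^sup>2"
  proof
    fix f
    have m: "(\<lambda>\<omega>. (norm (\<Lambda> \<omega> f))\<^sup>2) \<in> borel_measurable M" by (rule sm_normsq[OF sm])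
    have "(\<integral>\<^sup>+\<omega>. ennreal (norm ((norm (\<Lambda> \<omega> f))\<^sup>2)) \<partial>M) < \<infinity>"
      using AB(4)[of f] by (simp add: le_less_trans)
    then have i: "integrable M (\<lambda>\<omega>. (norm (\<Lambda> \<omega> f))\<^sup>2)" by (rule integrableI_bounded[OF m])
    have e: "(\<integral>\<^sup>+\<omega>. ennreal ((norm (\<Lambda> \<omega> f))\<^sup>2) \<partial>M) = ennreal (\<integral>\<omega>. (norm (\<Lambda> \<omega> f))\<^sup>2 \<partial>M)"
      by (rule nn_integral_eq_integral[OF i]) auto
    have nn: "0 \<le> (\<integral>\<omega>. (norm (\<Lambda> \<omega> f))\<^sup>2 \<partial>M)" by (rule Bochner_Integration.integral_nonneg) auto
    have "0 \<le> B * (norm f)\<^sup>2" using AB by simp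
    then show "integrable M (\<lambda>\<omega>. (norm (\<Lambda> \<omega> f))\<^sup>2) \<and>
     A * (norm f)\<^sup>2 \<le> (\<integral>\<omega>. (norm (\<Lambda> \<omega> f))\<^sup>2 \<partial>M) \<and>
     (\<integral>\<omega>. (norm (\<Lambda> \<omega> f))\<^sup>2 \<partial>M) \<le> B * (norm f)\<^sup>2"
      using i AB(3)[of f] AB(4)[of f] nn by (simp add: e ennreal_le_iff)
  qed
  then show ?thesis using AB by blast
qed

lemma frame_intro:
  fixes \<Lambda> :: "'w \<Rightarrow> 'v::chilbert_space \<Rightarrow> 'k::chilbert_space"
  assumes "\<forall>\<omega>\<in>space M. bounded_clinear (\<Lambda> \<omega>) \<and> range (\<Lambda> \<omega>) \<subseteq> K \<omega>"
    and "\<forall>f. strongly_measurable M (\<lambda>\<omega>. \<Lambda> \<omega> f)"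
    and A: "0 < A"
    and b: "\<And>f. integrable M (\<lambda>\<omega>. (norm (\<Lambda> \<omega> f))\<^sup>2) \<and>
     A * (norm f)\<^sup>2 \<le> (\<integral>\<omega>. (norm (\<Lambda> \<omega> f))\<^sup>2 \<partial>M) \<and>
     (\<integral>\<omega>. (norm (\<Lambda> \<omega> f))\<^sup>2 \<partial>M) \<le> B * (norm f)\<^sup>2"
  shows "cg_frame M K \<Lambda>"
proof -
  have "\<forall>f. ennreal (A * (norm f)\<^sup>2) \<le> (\<integral>\<^sup>+\<omega>. ennreal ((norm (\<Lambda> \<omega> f))\<^sup>2) \<partial>M) \<and>
             (\<integral>\<^sup>+\<omega>. ennreal ((norm (\<Lambda> \<omega> f))\<^sup>2) \<partial>M) \<le> ennreal (max B A * (norm f)\<^sup>2)"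
  proof
    fix f
    have e: "(\<integral>\<^sup>+\<omega>. ennreal ((norm (\<Lambda> \<omega> f))\<^sup>2) \<partial>M) = ennreal (\<integral>\<omega>. (norm (\<Lambda> \<omega> f))\<^sup>2 \<partial>M)"
      by (rule nn_integral_eq_integral) (use b in auto)
    have "B * (norm f)\<^sup>2 \<le> max B A * (norm f)\<^sup>2" by (simp add: mult_right_mono)
    then show "ennreal (A * (norm f)\<^sup>2) \<le> (\<integral>\<^sup>+\<omega>. ennreal ((norm (\<Lambda> \<omega> f))\<^sup>2) \<partial>M) \<and>
             (\<integral>\<^sup>+\<omega>. ennreal ((norm (\<Lambda> \<omega> f))\<^sup>2) \<partial>M) \<le> ennreal (max B A * (norm f)\<^sup>2)"
      unfolding e using b[of f] by (auto intro!: ennreal_leI)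
  qed
  then show ?thesis using assms unfolding cg_frame_def
    by (intro conjI exI[of _ A] exI[of _ "max B A"]) auto
qed

lemma sq_sum_le: "(norm (a + b::'a::real_normed_vector))\<^sup>2 \<le> 2 * (norm a)\<^sup>2 + 2 * (norm b)\<^sup>2"
proof -
  have "norm (a + b) \<le> norm a + norm b" by (rule norm_triangle_ineq)
  then have "(norm (a + b))\<^sup>2 \<le> (norm a + norm b)\<^sup>2" by (simp add: power_mono)
  also have "\<dots> \<le> 2 * (norm a)\<^sup>2 + 2 * (norm b)\<^sup>2"
  proof -
    have "0 \<le> (norm a - norm b)\<^sup>2" by simp
    then show ?thesis by (simp add: power2_eq_square algebra_simps)
  qed
  finally show ?thesis .
qed

lemma norm_prod_sq: "(norm (p :: 'a::real_normed_vector \<times> 'b::real_normed_vector))\<^sup>2 = (norm (fst p))\<^sup>2 + (norm (snd p))\<^sup>2"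
  by (simp add: norm_prod_def)

lemma sum_upper:
  fixes \<Lambda> :: "'w \<Rightarrow> 'a::chilbert_space \<Rightarrow> 'k::chilbert_space" and \<Psi> :: "'w \<Rightarrow> 'b::chilbert_space \<Rightarrow> 'k"
  assumes "cg_frame M K \<Lambda>" "cg_frame M K \<Psi>"
  shows "\<exists>B>0. \<forall>p. integrable M (\<lambda>\<omega>. (norm (\<Lambda> \<omega> (fst p) + \<Psi> \<omega> (snd p)))\<^sup>2) \<and>
     (\<integral>\<omega>. (norm (\<Lambda> \<omega> (fst p) + \<Psi> \<omega> (snd p)))\<^sup>2 \<partial>M) \<le> B * (norm p)\<^sup>2"
proof -
  obtain A1 B1 where 1: "0 < A1" "A1 \<le> B1" "\<And>f. integrable M (\<lambda>\<omega>. (norm (\<Lambda> \<omega> f))\<^sup>2)"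
     "\<And>f. (\<integral>\<omega>. (norm (\<Lambda> \<omega> f))\<^sup>2 \<partial>M) \<le> B1 * (norm f)\<^sup>2"
    using frame_dest[OF assms(1)] by blast
  obtain A2 B2 where 2: "0 < A2" "A2 \<le> B2" "\<And>f. integrable M (\<lambda>\<omega>. (norm (\<Psi> \<omega> f))\<^sup>2)"
     "\<And>f. (\<integral>\<omega>. (norm (\<Psi> \<omega> f))\<^sup>2 \<partial>M) \<le> B2 * (norm f)\<^sup>2"
    using frame_dest[OF assms(2)] by blast
  have sm1: "\<And>f. strongly_measurable M (\<lambda>\<omega>. \<Lambda> \<omega> f)" using assms unfolding cg_frame_def by blast
  have sm2: "\<And>f. strongly_measurable M (\<lambda>\<omega>. \<Psi> \<omega> f)" using assms unfolding cg_frame_def by blast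
  have "\<forall>p. integrable M (\<lambda>\<omega>. (norm (\<Lambda> \<omega> (fst p) + \<Psi> \<omega> (snd p)))\<^sup>2) \<and>
     (\<integral>\<omega>. (norm (\<Lambda> \<omega> (fst p) + \<Psi> \<omega> (snd p)))\<^sup>2 \<partial>M) \<le> (2 * (B1 + B2)) * (norm p)\<^sup>2"
  proof
    fix p :: "'a \<times> 'b"
    define f where "f = fst p"
    define g where "g = snd p"
    have ib: "integrable M (\<lambda>\<omega>. 2 * (norm (\<Lambda> \<omega> f))\<^sup>2 + 2 * (norm (\<Psi> \<omega> g))\<^sup>2)"
      using 1(3) 2(3) by auto
    have m: "(\<lambda>\<omega>. (norm (\<Lambda> \<omega> f + \<Psi> \<omega> g))\<^sup>2) \<in> borel_measurable M"
      by (rule sm_normsq[OF sm_add[OF sm1 sm2]])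
    have i: "integrable M (\<lambda>\<omega>. (norm (\<Lambda> \<omega> f + \<Psi> \<omega> g))\<^sup>2)"
      by (rule Bochner_Integration.integrable_bound[OF ib m]) (auto intro!: AE_I2 simp: sq_sum_le)
    have "(\<integral>\<omega>. (norm (\<Lambda> \<omega> f + \<Psi> \<omega> g))\<^sup>2 \<partial>M) \<le> (\<integral>\<omega>. 2 * (norm (\<Lambda> \<omega> f))\<^sup>2 + 2 * (norm (\<Psi> \<omega> g))\<^sup>2 \<partial>M)"
      by (rule Bochner_Integration.integral_mono[OF i ib]) (simp add: sq_sum_le)
    also have "\<dots> = 2 * (\<integral>\<omega>. (norm (\<Lambda> \<omega> f))\<^sup>2 \<partial>M) + 2 * (\<integral>\<omega>. (norm (\<Psi> \<omega> g))\<^sup>2 \<partial>M)"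
      using 1(3) 2(3) by simp
    also have "\<dots> \<le> 2 * (B1 * (norm f)\<^sup>2) + 2 * (B2 * (norm g)\<^sup>2)"
      using 1(4)[of f] 2(4)[of g] by simp
    also have "\<dots> \<le> (2 * (B1 + B2)) * (norm p)\<^sup>2"
      using 1 2 by (simp add: norm_prod_sq f_def g_def algebra_simps add_mono mult_left_mono)
    finally show "integrable M (\<lambda>\<omega>. (norm (\<Lambda> \<omega> (fst p) + \<Psi> \<omega> (snd p)))\<^sup>2) \<and>
     (\<integral>\<omega>. (norm (\<Lambda> \<omega> (fst p) + \<Psi> \<omega> (snd p)))\<^sup>2 \<partial>M) \<le> (2 * (B1 + B2)) * (norm p)\<^sup>2"
      using i by (simp add: f_def g_def)
  qed
  moreover have "2 * (B1 + B2) > 0" using 1 2 by simp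
  ultimately show ?thesis by blast
qed

lemma ci_integrable:
  fixes \<Lambda> :: "'w \<Rightarrow> 'a::chilbert_space \<Rightarrow> 'k::chilbert_space" and \<Theta> :: "'w \<Rightarrow> 'b::chilbert_space \<Rightarrow> 'k"
  assumes "cg_frame M K \<Lambda>" "cg_frame M K \<Theta>"
  shows "integrable M (\<lambda>\<omega>. cinner (\<Lambda> \<omega> f) (\<Theta> \<omega> g))"
proof -
  obtain A1 B1 where 1: "\<And>f. integrable M (\<lambda>\<omega>. (norm (\<Lambda> \<omega> f))\<^sup>2)"
    using frame_dest[OF assms(1)] by blast
  obtain A2 B2 where 2: "\<And>f. integrable M (\<lambda>\<omega>. (norm (\<Theta> \<omega> f))\<^sup>2)"
    using frame_dest[OF assms(2)] by blast
  have sm1: "\<And>f. strongly_measurable M (\<lambda>\<omega>. \<Lambda> \<omega> f)" using assms unfolding cg_frame_def by blast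
  have sm2: "\<And>f. strongly_measurable M (\<lambda>\<omega>. \<Theta> \<omega> f)" using assms unfolding cg_frame_def by blast
  have ib: "integrable M (\<lambda>\<omega>. (norm (\<Lambda> \<omega> f))\<^sup>2 + (norm (\<Theta> \<omega> g))\<^sup>2)" using 1 2 by auto
  have pt: "norm (cinner (\<Lambda> \<omega> f) (\<Theta> \<omega> g)) \<le> norm ((norm (\<Lambda> \<omega> f))\<^sup>2 + (norm (\<Theta> \<omega> g))\<^sup>2)" for \<omega>
  proof -
    have "norm (cinner (\<Lambda> \<omega> f) (\<Theta> \<omega> g)) \<le> norm (\<Lambda> \<omega> f) * norm (\<Theta> \<omega> g)" by (rule ci_cauchy_schwarz)
    also have "\<dots> \<le> (norm (\<Lambda> \<omega> f))\<^sup>2 + (norm (\<Theta> \<omega> g))\<^sup>2"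
    proof -
      have "0 \<le> (norm (\<Lambda> \<omega> f) - norm (\<Theta> \<omega> g))\<^sup>2" by simp
      then have h1: "2 * (norm (\<Lambda> \<omega> f) * norm (\<Theta> \<omega> g)) \<le> norm (\<Lambda> \<omega> f) * norm (\<Lambda> \<omega> f) + norm (\<Theta> \<omega> g) * norm (\<Theta> \<omega> g)"
        by (simp add: power2_eq_square algebra_simps)
      have h2: "0 \<le> norm (\<Lambda> \<omega> f) * norm (\<Theta> \<omega> g)" by simp
      show ?thesis unfolding power2_eq_square using h1 h2 by linarith
    qed
    finally show ?thesis by simp
  qed
  show ?thesis
    by (rule Bochner_Integration.integrable_bound[OF ib sm_cinner[OF sm1 sm2]]) (auto intro!: AE_I2 order.trans[OF pt])
qed

lemma amgm: "0 < (B::real) \<Longrightarrow> x * y \<le> (B * x\<^sup>2 + y\<^sup>2 / B) / 2"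
proof -
  assume B: "0 < B"
  have "0 \<le> (B * x - y)\<^sup>2" by simp
  then have "2 * B * (x * y) \<le> B * (B * x\<^sup>2) + y\<^sup>2" by (simp add: power2_eq_square algebra_simps)
  then show ?thesis using B by (simp add: field_simps power2_eq_square)
qed

lemma lower_lemma:
  fixes x y c :: "'w \<Rightarrow> real"
  assumes ix: "integrable M (\<lambda>\<omega>. (x \<omega>)\<^sup>2)" and iy: "integrable M (\<lambda>\<omega>. (y \<omega>)\<^sup>2)"
    and ic: "integrable M c" and cle: "\<And>\<omega>. c \<omega> \<le> x \<omega> * y \<omega>"
    and n: "n \<le> integral\<^sup>L M c" and By: "integral\<^sup>L M (\<lambda>\<omega>. (y \<omega>)\<^sup>2) \<le> B * n" and B: "0 < B"
  shows "n / B \<le> integral\<^sup>L M (\<lambda>\<omega>. (x \<omega>)\<^sup>2)"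
proof -
  have ir: "integrable M (\<lambda>\<omega>. (B * (x \<omega>)\<^sup>2 + (y \<omega>)\<^sup>2 / B) / 2)" using ix iy by auto
  have "n \<le> integral\<^sup>L M c" by (rule n)
  also have "\<dots> \<le> integral\<^sup>L M (\<lambda>\<omega>. (B * (x \<omega>)\<^sup>2 + (y \<omega>)\<^sup>2 / B) / 2)"
    by (rule Bochner_Integration.integral_mono[OF ic ir]) (meson amgm[OF B] cle order.trans)
  also have "\<dots> = (B * integral\<^sup>L M (\<lambda>\<omega>. (x \<omega>)\<^sup>2) + integral\<^sup>L M (\<lambda>\<omega>. (y \<omega>)\<^sup>2) / B) / 2"
    using ix iy by simp
  also have "\<dots> \<le> (B * integral\<^sup>L M (\<lambda>\<omega>. (x \<omega>)\<^sup>2) + n) / 2"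
    using By B by (simp add: field_simps)
  finally have "n \<le> B * integral\<^sup>L M (\<lambda>\<omega>. (x \<omega>)\<^sup>2)" by simp
  then show ?thesis using B by (simp add: field_simps)
qed


lemma pw_sum:
  fixes L1 :: "'a::chilbert_space \<Rightarrow> 'k::chilbert_space" and L2 :: "'b::chilbert_space \<Rightarrow> 'k"
  assumes K: "closed_csubspace S" and 1: "bounded_clinear L1 \<and> range L1 \<subseteq> S"
    and 2: "bounded_clinear L2 \<and> range L2 \<subseteq> S"
  shows "bounded_clinear (\<lambda>p. L1 (fst p) + L2 (snd p)) \<and> range (\<lambda>p. L1 (fst p) + L2 (snd p)) \<subseteq> S"
proof -
  have b1: "bounded_linear L1" and c1: "\<And>c x. L1 (c *\<^sub>C x) = c *\<^sub>C L1 x" using 1 by (auto simp: bounded_clinear_def)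
  have b2: "bounded_linear L2" and c2: "\<And>c x. L2 (c *\<^sub>C x) = c *\<^sub>C L2 x" using 2 by (auto simp: bounded_clinear_def)
  have "bounded_linear (\<lambda>p. L1 (fst p) + L2 (snd p))"
    by (intro bounded_linear_add bounded_linear_compose[OF b1] bounded_linear_compose[OF b2]
        bounded_linear_fst bounded_linear_snd)
  moreover have "\<forall>c p. L1 (fst (c *\<^sub>C p)) + L2 (snd (c *\<^sub>C p)) = c *\<^sub>C (L1 (fst p) + L2 (snd p))"
    by (simp add: scaleC_prod_def c1 c2 scaleC_add_right)
  moreover have "range (\<lambda>p. L1 (fst p) + L2 (snd p)) \<subseteq> S"
    using 1 2 K by (auto simp: closed_csubspace_def)
  ultimately show ?thesis by (simp add: bounded_clinear_def)
qed

theorem proposition2p9: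
  fixes M :: "'w measure"
    and K :: "'w \<Rightarrow> 'k::chilbert_space set"
    and \<Theta> \<Lambda> :: "'w \<Rightarrow> 'h::chilbert_space \<Rightarrow> 'k"
    and \<Phi> \<Psi> :: "'w \<Rightarrow> 'j::chilbert_space \<Rightarrow> 'k"
  assumes "\<forall>\<omega>\<in>space M. closed_csubspace (K \<omega>)"
    and "cg_frame M K \<Theta>" and "cg_dual_of M K \<Lambda> \<Theta>"
    and "cg_frame M K \<Phi>" and "cg_dual_of M K \<Psi> \<Phi>"
    and "strongly_disjoint M K \<Lambda> \<Phi>"
    and "strongly_disjoint M K \<Theta> \<Psi>"
  shows "cg_frame M K (\<lambda>\<omega> p. \<Lambda> \<omega> (fst p) + \<Psi> \<omega> (snd p))
       \<and> cg_frame M K (\<lambda>\<omega> p. \<Theta> \<omega> (fst p) + \<Phi> \<omega> (snd p))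
       \<and> cg_dual_of M K (\<lambda>\<omega> p. \<Lambda> \<omega> (fst p) + \<Psi> \<omega> (snd p))
                       (\<lambda>\<omega> p. \<Theta> \<omega> (fst p) + \<Phi> \<omega> (snd p))"
proof -
  have fL: "cg_frame M K \<Lambda>" and fT: "cg_frame M K \<Theta>" and fF: "cg_frame M K \<Phi>" and fP: "cg_frame M K \<Psi>"
    using assms by (auto simp: cg_dual_of_def)
  have dLT: "\<And>f g. cinner f g = (\<integral>\<omega>. cinner (\<Lambda> \<omega> f) (\<Theta> \<omega> g) \<partial>M)"
    using assms(3) by (auto simp: cg_dual_of_def)
  have dPF: "\<And>f g. cinner f g = (\<integral>\<omega>. cinner (\<Psi> \<omega> f) (\<Phi> \<omega> g) \<partial>M)"
    using assms(5) by (auto simp: cg_dual_of_def)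
  have dLF: "\<And>f g. (\<integral>\<omega>. cinner (\<Lambda> \<omega> f) (\<Phi> \<omega> g) \<partial>M) = 0"
    using assms(6) by (auto simp: strongly_disjoint_def)
  have dTP: "\<And>f g. (\<integral>\<omega>. cinner (\<Theta> \<omega> f) (\<Psi> \<omega> g) \<partial>M) = 0"
    using assms(7) by (auto simp: strongly_disjoint_def)
  define G where "G = (\<lambda>\<omega> p. \<Lambda> \<omega> (fst p) + \<Psi> \<omega> (snd p))"
  define D where "D = (\<lambda>\<omega> p. \<Theta> \<omega> (fst p) + \<Phi> \<omega> (snd p))"
  have pwG: "\<forall>\<omega>\<in>space M. bounded_clinear (G \<omega>) \<and> range (G \<omega>) \<subseteq> K \<omega>"
  proof
    fix \<omega> assume w: "\<omega> \<in> space M"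
    show "bounded_clinear (G \<omega>) \<and> range (G \<omega>) \<subseteq> K \<omega>"
      unfolding G_def by (rule pw_sum) (use w fL fP assms(1) in \<open>auto simp: cg_frame_def\<close>)
  qed
  have pwD: "\<forall>\<omega>\<in>space M. bounded_clinear (D \<omega>) \<and> range (D \<omega>) \<subseteq> K \<omega>"
  proof
    fix \<omega> assume w: "\<omega> \<in> space M"
    show "bounded_clinear (D \<omega>) \<and> range (D \<omega>) \<subseteq> K \<omega>"
      unfolding D_def by (rule pw_sum) (use w fT fF assms(1) in \<open>auto simp: cg_frame_def\<close>)
  qed
  have smG: "\<forall>p. strongly_measurable M (\<lambda>\<omega>. G \<omega> p)"
    using fL fP unfolding G_def cg_frame_def by (auto intro!: sm_add)
  have smD: "\<forall>p. strongly_measurable M (\<lambda>\<omega>. D \<omega> p)"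
    using fT fF unfolding D_def cg_frame_def by (auto intro!: sm_add)
  have expand: "cinner (G \<omega> p) (D \<omega> q) =
     (cinner (\<Lambda> \<omega> (fst p)) (\<Theta> \<omega> (fst q)) + cinner (\<Lambda> \<omega> (fst p)) (\<Phi> \<omega> (snd q))) +
     (cnj (cinner (\<Theta> \<omega> (fst q)) (\<Psi> \<omega> (snd p))) + cinner (\<Psi> \<omega> (snd p)) (\<Phi> \<omega> (snd q)))" for \<omega> p q
    by (simp add: G_def D_def cinner_add_left ci_add_right cinner_commute[of "\<Psi> \<omega> (snd p)"])
  have iLT: "\<And>f g. integrable M (\<lambda>\<omega>. cinner (\<Lambda> \<omega> f) (\<Theta> \<omega> g))" by (rule ci_integrable[OF fL fT])
  have iLF: "\<And>f g. integrable M (\<lambda>\<omega>. cinner (\<Lambda> \<omega> f) (\<Phi> \<omega> g))" by (rule ci_integrable[OF fL fF])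
  have iTP: "\<And>f g. integrable M (\<lambda>\<omega>. cnj (cinner (\<Theta> \<omega> f) (\<Psi> \<omega> g)))"
    using ci_integrable[OF fT fP] by simp
  have iPF: "\<And>f g. integrable M (\<lambda>\<omega>. cinner (\<Psi> \<omega> f) (\<Phi> \<omega> g))" by (rule ci_integrable[OF fP fF])
  have iGD: "integrable M (\<lambda>\<omega>. cinner (G \<omega> p) (D \<omega> q))" for p q
    unfolding expand using iLT iLF iTP iPF by auto
  have dual: "cinner p q = (\<integral>\<omega>. cinner (G \<omega> p) (D \<omega> q) \<partial>M)" for p q
  proof -
    have "(\<integral>\<omega>. cinner (G \<omega> p) (D \<omega> q) \<partial>M) =
      ((\<integral>\<omega>. cinner (\<Lambda> \<omega> (fst p)) (\<Theta> \<omega> (fst q)) \<partial>M) + (\<integral>\<omega>. cinner (\<Lambda> \<omega> (fst p)) (\<Phi> \<omega> (snd q)) \<partial>M)) +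
      ((\<integral>\<omega>. cnj (cinner (\<Theta> \<omega> (fst q)) (\<Psi> \<omega> (snd p))) \<partial>M) + (\<integral>\<omega>. cinner (\<Psi> \<omega> (snd p)) (\<Phi> \<omega> (snd q)) \<partial>M))"
      unfolding expand using iLT iLF iTP iPF by simp
    also have "\<dots> = cinner (fst p) (fst q) + cinner (snd p) (snd q)"
      by (simp add: dLT[symmetric] dPF[symmetric] dLF dTP integral_cnj)
    finally show ?thesis by (simp add: cinner_prod_def)
  qed
  obtain BG where BG: "BG > 0" "\<And>p. integrable M (\<lambda>\<omega>. (norm (G \<omega> p))\<^sup>2)"
      "\<And>p. (\<integral>\<omega>. (norm (G \<omega> p))\<^sup>2 \<partial>M) \<le> BG * (norm p)\<^sup>2"
    using sum_upper[OF fL fP] unfolding G_def by blast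
  obtain BD where BD: "BD > 0" "\<And>p. integrable M (\<lambda>\<omega>. (norm (D \<omega> p))\<^sup>2)"
      "\<And>p. (\<integral>\<omega>. (norm (D \<omega> p))\<^sup>2 \<partial>M) \<le> BD * (norm p)\<^sup>2"
    using sum_upper[OF fT fF] unfolding D_def by blast
  have nle: "(norm p)\<^sup>2 \<le> (\<integral>\<omega>. cmod (cinner (G \<omega> p) (D \<omega> p)) \<partial>M)" for p
  proof -
    have "(norm p)\<^sup>2 = Re (cinner p p)" by (simp add: ci_self_real)
    also have "\<dots> = Re (\<integral>\<omega>. cinner (G \<omega> p) (D \<omega> p) \<partial>M)" by (simp add: dual)
    also have "\<dots> \<le> cmod (\<integral>\<omega>. cinner (G \<omega> p) (D \<omega> p) \<partial>M)" by (rule complex_Re_le_cmod)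
    also have "\<dots> \<le> (\<integral>\<omega>. cmod (cinner (G \<omega> p) (D \<omega> p)) \<partial>M)" by (rule integral_norm_bound)
    finally show ?thesis .
  qed
  have icm: "integrable M (\<lambda>\<omega>. cmod (cinner (G \<omega> p) (D \<omega> p)))" for p
    using iGD by (rule integrable_norm)
  have lowG: "(1 / BG) * (norm p)\<^sup>2 \<le> (\<integral>\<omega>. (norm (D \<omega> p))\<^sup>2 \<partial>M)" for p
    using lower_lemma[where x="\<lambda>\<omega>. norm (D \<omega> p)" and y="\<lambda>\<omega>. norm (G \<omega> p)",
        OF BD(2) BG(2) icm _ nle BG(3) BG(1)]
    by (simp add: ci_cauchy_schwarz mult.commute[of "norm (D _ p)"])
  have lowD: "(1 / BD) * (norm p)\<^sup>2 \<le> (\<integral>\<omega>. (norm (G \<omega> p))\<^sup>2 \<partial>M)" for p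
    using lower_lemma[where x="\<lambda>\<omega>. norm (G \<omega> p)" and y="\<lambda>\<omega>. norm (D \<omega> p)",
        OF BG(2) BD(2) icm _ nle BD(3) BD(1)]
    by (simp add: ci_cauchy_schwarz)
  have frG: "cg_frame M K G"
    by (rule frame_intro[OF pwG smG, of "1 / BD" BG]) (use BD BG lowD in auto)
  have frD: "cg_frame M K D"
    by (rule frame_intro[OF pwD smD, of "1 / BG" BD]) (use BD BG lowG in auto)
  have "cg_dual_of M K G D" using frG frD dual by (auto simp: cg_dual_of_def)
  then show ?thesis using frG frD unfolding G_def D_def by blast
qed

end
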